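(* Let $G=S^1$ and let $\rho\colon G\to U(n)\subset O(2n)$ be an orthogonal representation. Then there exists a smooth action of $G$ on $X^{2n}=S^2\times\dots\times S^2$ ($n$ factors) such that for every point $x\in X^{2n}$, the representation of the isotropy group $G_x$ on the tangent space $T_x(X^{2n})$ is isomorphic to $\mathrm{Res}^G_{G_x}(\rho)$.
   Context: $G_x$ is the isotropy subgroup of $x$; $\mathrm{Res}^G_{G_x}(\rho)$ is the restriction of $\rho$ (viewed as a real $2n$-dimensional representation) to $G_x$. *)

theory Defs
  imports "HOL-Analysis.Analysis"
begin

definition circle_group :: "complex set" where
  "circle_group = sphere 0 1"

text \<open>C-infinity smoothness on an open set U between Euclidean spaces: there is a family of
  functions containing f, closed under taking (Frechet) directional derivatives, all of whose
  members are differentiable at every point of U.  (All iterated derivatives exist.)\<close>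
definition smooth_on :: "'a::euclidean_space set \<Rightarrow> ('a \<Rightarrow> 'b::euclidean_space) \<Rightarrow> bool" where
  "smooth_on U f \<longleftrightarrow> open U \<and>
     (\<exists>F. f \<in> F \<and> (\<forall>h\<in>F. \<forall>x\<in>U. h differentiable (at x)) \<and>
          (\<forall>h\<in>F. \<forall>v. (\<lambda>x. frechet_derivative h (at x) v) \<in> F))"

definition conj_transpose :: "complex^'n^'n \<Rightarrow> complex^'n^'n" where
  "conj_transpose A = (\<chi> i j. cnj (A $ j $ i))"

definition unitary :: "complex^'n^'n \<Rightarrow> bool" where
  "unitary A \<longleftrightarrow> conj_transpose A ** A = mat 1 \<and> A ** conj_transpose A = mat 1"

text \<open>A unitary representation rho : S^1 -> U(n) (continuous homomorphism).  Viewed as a real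
  representation on C^n = R^{2n}, it is an orthogonal representation with image in U(n) \<subseteq> O(2n).\<close>
definition unitary_rep :: "(complex \<Rightarrow> complex^'n^'n) \<Rightarrow> bool" where
  "unitary_rep \<rho> \<longleftrightarrow> continuous_on circle_group \<rho> \<and>
     (\<forall>g\<in>circle_group. unitary (\<rho> g)) \<and>
     (\<forall>g\<in>circle_group. \<forall>h\<in>circle_group. \<rho> (g * h) = \<rho> g ** \<rho> h)"

definition sphere_product :: "(real^3^'n) set" where
  "sphere_product = {x. \<forall>i. norm (x $ i) = 1}"

definition smooth_circle_action :: "(complex \<Rightarrow> 'a::euclidean_space \<Rightarrow> 'a) \<Rightarrow> 'a set \<Rightarrow> bool" where
  "smooth_circle_action a X \<longleftrightarrow>
     (\<forall>g\<in>circle_group. \<forall>x\<in>X. a g x \<in> X) \<and>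
     (\<forall>x\<in>X. a 1 x = x) \<and>
     (\<forall>g\<in>circle_group. \<forall>h\<in>circle_group. \<forall>x\<in>X. a (g * h) x = a g (a h x)) \<and>
     (\<exists>U F. circle_group \<times> X \<subseteq> U \<and> smooth_on U F \<and>
            (\<forall>g\<in>circle_group. \<forall>x\<in>X. F (g, x) = a g x))"

definition curve_through :: "'a::real_normed_vector set \<Rightarrow> 'a \<Rightarrow> (real \<Rightarrow> 'a) \<Rightarrow> 'a \<Rightarrow> bool" where
  "curve_through S x \<gamma> v \<longleftrightarrow> \<gamma> 0 = x \<and> (\<exists>e>0. \<forall>t. \<bar>t\<bar> < e \<longrightarrow> \<gamma> t \<in> S) \<and>
     (\<gamma> has_vector_derivative v) (at 0)"

definition tangent_space :: "'a::real_normed_vector set \<Rightarrow> 'a \<Rightarrow> 'a set" where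
  "tangent_space S x = {v. \<exists>\<gamma>. curve_through S x \<gamma> v}"

definition isotropy :: "(complex \<Rightarrow> 'a \<Rightarrow> 'a) \<Rightarrow> 'a \<Rightarrow> complex set" where
  "isotropy a x = {g \<in> circle_group. a g x = x}"

text \<open>The isotropy representation of G_x on T_x X (g acts by the differential of a g at x) is
  isomorphic to Res(rho) (rho viewed as a real 2n-dimensional representation on C^n):
  there is a real-linear isomorphism phi : C^n -> T_x X intertwining the two actions.\<close>
definition isotropy_rep_iso ::
  "(complex \<Rightarrow> 'a::euclidean_space \<Rightarrow> 'a) \<Rightarrow> 'a set \<Rightarrow> (complex \<Rightarrow> complex^'n^'n) \<Rightarrow> 'a \<Rightarrow> bool" where
  "isotropy_rep_iso a X \<rho> x \<longleftrightarrow>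
     (\<exists>\<phi> :: complex^'n \<Rightarrow> 'a. linear \<phi> \<and> inj \<phi> \<and> range \<phi> = tangent_space X x \<and>
        (\<forall>g\<in>isotropy a x. \<forall>u \<gamma>. curve_through X x \<gamma> (\<phi> u) \<longrightarrow>
            ((\<lambda>t. a g (\<gamma> t)) has_vector_derivative \<phi> (\<rho> g *v u)) (at 0)))"

end

theory Submission
  imports Defs "HOL-Computational_Algebra.Fundamental_Theorem_Algebra"
begin

definition chr :: "int \<Rightarrow> complex \<Rightarrow> complex" where
  "chr k g = (if 0 \<le> k then g ^ nat k else cnj g ^ nat (-k))"

lemma additive_linear:
  fixes \<theta> :: "real \<Rightarrow> real"
  assumes cont: "continuous_on UNIV \<theta>" and add: "\<And>s t. \<theta> (s + t) = \<theta> s + \<theta> t"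
  shows "\<theta> t = t * \<theta> 1"
proof -
  have z: "\<theta> 0 = 0" using add[of 0 0] by simp
  have nat: "\<theta> (real n * t) = real n * \<theta> t" for n t
    by (induction n) (auto simp: z distrib_right add)
  have neg: "\<theta> (- t) = - \<theta> t" for t using add[of t "-t"] z by simp
  have int: "\<theta> (of_int m * t) = of_int m * \<theta> t" for m t
  proof (cases "m \<ge> 0")
    case True then show ?thesis using nat[of "nat m" t] by simp
  next
    case False
    have "\<theta> (of_int m * t) = \<theta> (- (real (nat (-m)) * t))" using False by simp
    also have "\<dots> = of_int m * \<theta> t" using neg nat[of "nat (-m)" t] False by simp
    finally show ?thesis .
  qed
  have rat: "\<theta> q = q * \<theta> 1" if qr: "q \<in> \<rat>" for q
  proof -
    obtain a b where ab: "b > 0" "coprime a b" "q = of_int a / of_int b" by (rule Rats_cases'[OF qr])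
    have "of_int a * \<theta> 1 = \<theta> (of_int a * 1)" using int[of a 1] by simp
    also have "of_int a * 1 = of_int b * q" using ab by simp
    also have "\<theta> (of_int b * q) = of_int b * \<theta> q" using int by simp
    finally have "of_int a * \<theta> 1 = of_int b * \<theta> q" .
    then have "\<theta> q = of_int a * \<theta> 1 / of_int b" using ab(1) by (simp add: field_simps)
    then show ?thesis using ab(3) by simp
  qed
  have cl: "closed {t. \<theta> t = t * \<theta> 1}"
  proof -
    have c2: "continuous_on UNIV (\<lambda>t. t * \<theta> 1)" by (intro continuous_intros)
    show ?thesis by (rule closed_Collect_eq[OF cont c2])
  qed
  have "closure \<rat> \<subseteq> {t. \<theta> t = t * \<theta> 1}"
    by (rule closure_minimal) (use rat cl in blast)+
  then show ?thesis using Rats_closure_real by auto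
qed

lemma character:
  fixes ch :: "complex \<Rightarrow> complex"
  assumes cont: "continuous_on circle_group ch"
    and hom: "\<And>g h. g \<in> circle_group \<Longrightarrow> h \<in> circle_group \<Longrightarrow> ch (g*h) = ch g * ch h"
    and nz: "\<And>g. g \<in> circle_group \<Longrightarrow> ch g \<noteq> 0"
  shows "\<exists>k. \<forall>g\<in>circle_group. ch g = chr k g"
proof -
  have cis_in: "cis t \<in> circle_group" for t by (simp add: circle_group_def)
  define f where "f t = ch (cis t)" for t
  have fcont: "continuous_on UNIV f"
    unfolding f_def by (rule continuous_on_compose2[OF cont]) (auto intro: continuous_intros simp: cis_in)
  have one_in: "1 \<in> circle_group" by (simp add: circle_group_def)
  have chi1: "ch 1 = 1" using hom[OF one_in one_in] nz[OF one_in] by simp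
  have fadd: "f (s+t) = f s * f t" for s t unfolding f_def using hom[OF cis_in cis_in] by (simp add: cis_mult)
  have fnz: "f t \<noteq> 0" for t using nz[OF cis_in] by (simp add: f_def)
  obtain h where hc: "continuous_on UNIV h" and hf: "\<And>t. f t = exp (h t)"
    by (rule continuous_logarithm_on_contractible[OF fcont contractible_UNIV]) (use fnz in auto)
  have dint: "\<exists>m::int. h (s+t) - h s - h t = 2*pi*m*\<i>" for s t
  proof -
    have "exp (h (s+t) - h s - h t) = 1" using fadd[of s t] hf fnz by (simp add: exp_diff)
    then obtain n::int where n: "Re (h (s+t) - h s - h t) = 0" "Im (h (s+t) - h s - h t) = of_int (2*n) * pi"
      by (auto simp: exp_eq_1)
    show ?thesis by (rule exI[of _ n]) (use n in \<open>simp add: complex_eq_iff\<close>)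
  qed
  have dconst: "h (s+t) - h s - h t = - h 0" for s t
  proof -
    let ?d = "\<lambda>t. h (s+t) - h s - h t"
    have "?d constant_on UNIV"
    proof (rule continuous_discrete_range_constant)
      show "connected (UNIV::real set)" by simp
      have "continuous_on UNIV (\<lambda>t. h (s+t))"
        by (rule continuous_on_compose2[OF hc]) (auto intro: continuous_intros)
      then show "continuous_on UNIV ?d" using hc by (intro continuous_intros) auto
      fix x :: real
      show "\<exists>e>0. \<forall>y. y \<in> UNIV \<and> ?d y \<noteq> ?d x \<longrightarrow> e \<le> norm (?d y - ?d x)"
      proof (intro exI[of _ "2*pi"] conjI allI impI)
        fix y assume y: "y \<in> UNIV \<and> ?d y \<noteq> ?d x"
        obtain m::int where m: "?d x = 2*pi*m*\<i>" using dint by blast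
        obtain m'::int where m': "?d y = 2*pi*m'*\<i>" using dint by blast
        have "m' \<noteq> m" using y m m' by auto
        then have ge: "1 \<le> \<bar>real_of_int m' - real_of_int m\<bar>"
          by (metis of_int_1_le_iff of_int_abs of_int_diff zero_less_abs_iff int_one_le_iff_zero_less right_minus_eq)
        have "?d y - ?d x = complex_of_real (2*pi*(real_of_int m' - real_of_int m)) * \<i>"
          using m m' by (simp add: algebra_simps)
        moreover have nrm: "norm (complex_of_real a * \<i>) = \<bar>a\<bar>" for a by (simp add: norm_mult)
        ultimately have "norm (?d y - ?d x) = \<bar>2*pi*(real_of_int m' - real_of_int m)\<bar>" by metis
        then have "norm (?d y - ?d x) = 2*pi*\<bar>real_of_int m' - real_of_int m\<bar>"
          by (simp add: abs_mult)
        then show "2*pi \<le> norm (?d y - ?d x)" using ge by (simp add: pi_gt_zero)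
      qed (simp add: pi_gt_zero)
    qed
    then obtain c where c: "\<And>x. ?d x = c" unfolding constant_on_def by auto
    have "?d 0 = - h 0" by simp
    then show ?thesis using c[of t] c[of 0] by simp
  qed
  define H where "H t = h t - h 0" for t
  have Hadd: "H (s+t) = H s + H t" for s t using dconst[of s t] by (simp add: H_def algebra_simps)
  have Hc: "continuous_on UNIV H" unfolding H_def using hc by (intro continuous_intros) auto
  have ReH: "Re (H t) = t * Re (H 1)" for t
    by (rule additive_linear) (use Hc Hadd in \<open>auto intro: continuous_intros\<close>)
  have ImH: "Im (H t) = t * Im (H 1)" for t
    by (rule additive_linear) (use Hc Hadd in \<open>auto intro: continuous_intros\<close>)
  have Hlin: "H t = of_real t * H 1" for t using ReH[of t] ImH[of t] by (simp add: complex_eq_iff)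
  have h0: "exp (h 0) = 1" using hf[of 0] chi1 by (simp add: f_def)
  have fexp: "f t = exp (of_real t * H 1)" for t
  proof -
    have "f t = exp (H t + h 0)" using hf[of t] by (simp add: H_def)
    also have "\<dots> = exp (H t)" using h0 by (simp add: exp_add)
    finally show ?thesis using Hlin[of t] by simp
  qed
  have "f (2*pi) = 1" using chi1 by (simp add: f_def)
  then have "exp (of_real (2*pi) * H 1) = 1" using fexp by simp
  then obtain n::int where n: "Re (of_real (2*pi) * H 1) = 0" "Im (of_real (2*pi) * H 1) = of_int (2*n) * pi"
    by (auto simp: exp_eq_1)
  have H1: "H 1 = \<i> * of_int n" using n pi_gt_zero by (simp add: complex_eq_iff)
  have fcis: "f t = cis (of_int n * t)" for t
    using fexp[of t] H1 by (simp add: cis_conv_exp mult.commute mult.left_commute)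
  show ?thesis
  proof (intro exI[of _ n] ballI)
    fix g assume g: "g \<in> circle_group"
    then have ng: "norm g = 1" by (simp add: circle_group_def)
    then have gne: "g \<noteq> 0" by auto
    have gc: "g = cis (Arg g)" using cis_Arg[OF gne] ng by (simp add: sgn_eq)
    have gp: "g ^ m = cis (real m * Arg g)" for m
      using arg_cong[where f="\<lambda>z. z ^ m", OF gc] Complex.DeMoivre[of "Arg g" m] by simp
    have gcp: "cnj g ^ m = cis (real m * (- Arg g))" for m
      using arg_cong[where f="\<lambda>z. cnj z ^ m", OF gc] Complex.DeMoivre[of "- Arg g" m] by (simp add: cis_cnj)
    have "ch g = f (Arg g)" using arg_cong[where f=ch, OF gc] by (simp add: f_def)
    also have "\<dots> = cis (of_int n * Arg g)" by (rule fcis)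
    also have "\<dots> = chr n g"
    proof (cases "0 \<le> n")
      case True
      have "g ^ nat n = cis (real (nat n) * Arg g)" by (rule gp)
      then show ?thesis using True by (simp add: chr_def)
    next
      case False
      have "cnj g ^ nat (-n) = cis (real (nat (-n)) * (- Arg g))" by (rule gcp)
      then show ?thesis using False by (simp add: chr_def)
    qed
    finally show "ch g = chr n g" .
  qed
qed

lemma sum_delta_smult:
  assumes "j \<in> S" "finite S"
  shows "(\<Sum>k\<in>S. (if k = j then (1::complex) else 0) *s f k) = (f j :: complex^'n)"
proof -
  have "(\<Sum>k\<in>S. (if k = j then (1::complex) else 0) *s f k) = (\<Sum>k\<in>S. if k = j then f k else 0)"
    by (rule sum.cong) auto
  also have "\<dots> = f j" using assms by simp
  finally show ?thesis .
qed


lemma mv_scale: "A *v (c *s x) = c *s (A *v (x::complex^'n))"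
  by (simp add: vec_eq_iff matrix_vector_mult_def sum_distrib_left algebra_simps)

lemma mv_sum: "A *v (\<Sum>i\<in>I. f i) = (\<Sum>i\<in>I. A *v (f i :: complex^'n))"
  by (induct I rule: infinite_finite_induct) (auto simp: matrix_vector_right_distrib)

definition mpow :: "complex^'n^'n \<Rightarrow> nat \<Rightarrow> complex^'n \<Rightarrow> complex^'n" where
  "mpow A j w = (((*v) A) ^^ j) w"

lemma mpow_0[simp]: "mpow A 0 w = w" by (simp add: mpow_def)
lemma mpow_Suc[simp]: "mpow A (Suc j) w = A *v mpow A j w" by (simp add: mpow_def)

definition peval :: "complex poly \<Rightarrow> complex^'n^'n \<Rightarrow> complex^'n \<Rightarrow> complex^'n" where
  "peval p A w = (\<Sum>j\<le>degree p. coeff p j *s mpow A j w)"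

lemma peval_ext: "degree p \<le> N \<Longrightarrow> peval p A w = (\<Sum>j\<le>N. coeff p j *s mpow A j w)"
  unfolding peval_def by (rule sum.mono_neutral_left) (auto simp: coeff_eq_0)

lemma peval_linfactor: "peval ([:-z,1:] * q) A w = A *v peval q A w - z *s peval q A w"
proof -
  let ?N = "Suc (degree q)"
  have dq: "degree ([:-z,1:]*q) \<le> ?N"
    using degree_mult_le[of "[:-z,1:]" q] by simp
  have eq: "[:-z,1:] * q = pCons 0 q + smult (-z) q" by simp
  have "peval ([:-z,1:]*q) A w = (\<Sum>j\<le>?N. coeff ([:-z,1:]*q) j *s mpow A j w)"
    by (rule peval_ext[OF dq])
  also have "\<dots> = (\<Sum>j\<le>?N. coeff (pCons 0 q) j *s mpow A j w) + (\<Sum>j\<le>?N. (-z * coeff q j) *s mpow A j w)"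
    unfolding eq coeff_add coeff_smult vector_sadd_rdistrib sum.distrib ..
  also have "(\<Sum>j\<le>?N. coeff (pCons 0 q) j *s mpow A j w) = (\<Sum>j\<le>degree q. coeff q j *s mpow A (Suc j) w)"
    by (subst sum.atMost_Suc_shift) simp
  also have "\<dots> = A *v peval q A w"
    by (simp add: peval_def mv_sum mv_scale)
  also have "(\<Sum>j\<le>?N. (-z * coeff q j) *s mpow A j w) = - (z *s peval q A w)"
  proof -
    have "(\<Sum>j\<le>?N. (-z * coeff q j) *s mpow A j w) = (\<Sum>j\<le>?N. (-z) *s (coeff q j *s mpow A j w))"
      by (simp add: vector_smult_assoc)
    also have "\<dots> = (-z) *s (\<Sum>j\<le>?N. coeff q j *s mpow A j w)"
      by (simp add: vec.scale_sum_right)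
    also have "(\<Sum>j\<le>?N. coeff q j *s mpow A j w) = peval q A w"
      by (rule peval_ext[symmetric]) simp
    finally show ?thesis by (simp add: vector_smult_lneg)
  qed
  finally show ?thesis by simp
qed

lemma peval_deg0: "degree p = 0 \<Longrightarrow> peval p A w = coeff p 0 *s w"
  by (simp add: peval_def)

lemma mpow_in: "vec.subspace W \<Longrightarrow> (\<forall>v\<in>W. A *v v \<in> W) \<Longrightarrow> w \<in> W \<Longrightarrow> mpow A j w \<in> W"
  by (induction j) auto

lemma peval_in: "vec.subspace W \<Longrightarrow> (\<forall>v\<in>W. A *v v \<in> W) \<Longrightarrow> w \<in> W \<Longrightarrow> peval p A w \<in> W"
  unfolding peval_def by (intro vec.subspace_sum vec.subspace_scale mpow_in) auto

lemma annihilator: "\<exists>p. p \<noteq> 0 \<and> peval p A (w::complex^'n) = 0"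
proof -
  define N where "N = CARD('n)"
  let ?f = "\<lambda>j. mpow A j w"
  show ?thesis
  proof (cases "inj_on ?f {..N}")
    case False
    then obtain i j where ij: "i \<le> N" "j \<le> N" "i < j" "?f i = ?f j"
      unfolding inj_on_def by (metis atMost_iff linorder_neqE_nat)
    define p where "p = monom (1::complex) j - monom 1 i"
    have cp: "coeff p k = (if k = j then 1 else 0) - (if k = i then 1 else 0)" for k
      by (simp add: p_def coeff_monom)
    have dp: "degree p \<le> N"
      unfolding p_def using degree_diff_le_max[of "monom (1::complex) j" "monom 1 i"] ij
        degree_monom_le[of "1::complex" j] degree_monom_le[of "1::complex" i] by linarith
    have "peval p A w = (\<Sum>k\<le>N. ((if k = j then 1 else 0) - (if k = i then 1 else 0)) *s ?f k)"
      unfolding peval_ext[OF dp] cp ..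
    also have "\<dots> = (\<Sum>k\<le>N. (if k = j then 1 else 0) *s ?f k) - (\<Sum>k\<le>N. (if k = i then 1 else 0) *s ?f k)"
      by (simp only: vector_sub_rdistrib sum_subtractf)
    also have "\<dots> = ?f j - ?f i" using ij by (simp only: sum_delta_smult finite_atMost atMost_iff)
    also have "\<dots> = 0" using ij by simp
    finally have "peval p A w = 0" .
    moreover have "p \<noteq> 0" using cp[of j] ij by auto
    ultimately show ?thesis by blast
  next
    case True
    let ?S = "?f ` {..N}"
    have cS: "card ?S = Suc N" using True by (simp add: card_image)
    have "vec.dim ?S \<le> vec.dim (UNIV :: (complex^'n) set)" by (rule vec.dim_subset) simp
    also have "\<dots> = N" by (simp add: N_def card_cart_basis)
    finally have "vec.dependent ?S"
      using vec.independent_bound_general[of ?S] cS by auto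
    then obtain t u where t: "finite t" "t \<subseteq> ?S" "(\<Sum>v\<in>t. u v *s v) = 0" "\<exists>v\<in>t. u v \<noteq> 0"
      unfolding vec.dependent_explicit by blast
    define c where "c j = (if ?f j \<in> t then u (?f j) else 0)" for j
    define p where "p = (\<Sum>j\<le>N. monom (c j) j)"
    have cp: "coeff p k = (if k \<le> N then c k else 0)" for k
      by (simp add: p_def coeff_sum coeff_monom)
    have dp: "degree p \<le> N" by (rule degree_le) (simp add: cp)
    have "peval p A w = (\<Sum>k\<le>N. c k *s ?f k)"
      by (simp add: peval_ext[OF dp] cp)
    also have "\<dots> = (\<Sum>k\<in>{k\<in>{..N}. ?f k \<in> t}. u (?f k) *s ?f k)"
      by (rule sum.mono_neutral_cong_right) (auto simp: c_def)
    also have "\<dots> = (\<Sum>v\<in>t. u v *s v)"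
    proof -
      have inj: "inj_on ?f {k\<in>{..N}. ?f k \<in> t}" using True by (rule inj_on_subset) auto
      have im: "?f ` {k\<in>{..N}. ?f k \<in> t} = t" using t(2) by auto
      show ?thesis using sum.reindex[OF inj, of "\<lambda>v. u v *s v"] im by simp
    qed
    also have "\<dots> = 0" by (rule t(3))
    finally have "peval p A w = 0" .
    moreover have "p \<noteq> 0"
    proof
      assume "p = 0"
      from t(4) obtain v where v: "v \<in> t" "u v \<noteq> 0" by blast
      then obtain k where k: "k \<le> N" "v = ?f k" using t(2) by auto
      have "coeff p k = u v" using cp[of k] k v by (simp add: c_def)
      then show False using \<open>p = 0\<close> v by simp
    qed
    ultimately show ?thesis by blast
  qed
qed

definition inv_sub :: "(complex^'n^'n) set \<Rightarrow> (complex^'n) set \<Rightarrow> bool" where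
  "inv_sub AA W \<longleftrightarrow> vec.subspace W \<and> (\<forall>A\<in>AA. \<forall>v\<in>W. A *v v \<in> W)"

lemma scalar_on_min:
  assumes comm: "\<forall>A\<in>AA. \<forall>B\<in>AA. A ** B = B ** A"
    and W: "inv_sub AA W"
    and Wmin: "\<And>K. inv_sub AA K \<Longrightarrow> K \<subseteq> W \<Longrightarrow> K \<noteq> {0} \<Longrightarrow> vec.dim W \<le> vec.dim K"
    and A: "A \<in> AA"
  shows "\<forall>p v. degree p = n \<longrightarrow> p \<noteq> 0 \<longrightarrow> v \<in> W \<longrightarrow> peval p A v = 0 \<longrightarrow>
           v = 0 \<or> (\<exists>c. \<forall>u\<in>W. A *v u = c *s u)"
proof (induction n rule: less_induct)
  case (less n)
  show ?case
  proof (intro allI impI)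
    fix p v assume dp: "degree p = n" and p0: "p \<noteq> 0" and vW: "v \<in> W" and pv: "peval p A v = 0"
    have Wsub: "vec.subspace W" and WA: "\<forall>v\<in>W. A *v v \<in> W" using W A by (auto simp: inv_sub_def)
    show "v = 0 \<or> (\<exists>c. \<forall>u\<in>W. A *v u = c *s u)"
    proof (cases "n = 0")
      case True
      have "coeff p 0 \<noteq> 0" using leading_coeff_neq_0[OF p0] dp True by simp
      then show ?thesis using pv peval_deg0[of p A v] dp True by simp
    next
      case False
      then have "\<not> constant (poly p)" using dp constant_degree[of p] by simp
      then obtain z where "poly p z = 0" using fundamental_theorem_of_algebra by blast
      then have "[:-z,1:] dvd p" by (simp add: poly_eq_0_iff_dvd)
      then obtain q where pq: "p = [:-z,1:] * q" by (elim dvdE)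
      have q0: "q \<noteq> 0" using p0 pq by auto
      have dq: "degree q < n" using degree_mult_eq[of "[:-z,1:]" q] q0 pq dp by simp
      define u where "u = peval q A v"
      have uW: "u \<in> W" unfolding u_def by (rule peval_in[OF Wsub WA vW])
      have Au: "A *v u = z *s u" using pv peval_linfactor[of z q A v] pq by (simp add: u_def)
      show ?thesis
      proof (cases "u = 0")
        case True
        then show ?thesis using less.IH[OF dq] q0 vW by (auto simp: u_def)
      next
        case False
        define K where "K = {x\<in>W. A *v x = z *s x}"
        have Ksub: "vec.subspace K"
          unfolding K_def vec.subspace_def using Wsub
          by (auto simp: vec.subspace_def matrix_vector_right_distrib mv_scale vec.scale_right_distrib vector_smult_assoc mult.commute)
        have Kinv: "inv_sub AA K"
          unfolding inv_sub_def
        proof (intro conjI Ksub ballI)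
          fix B x assume B: "B \<in> AA" and x: "x \<in> K"
          have "B *v x \<in> W" using W B x by (auto simp: inv_sub_def K_def)
          moreover have "A *v (B *v x) = z *s (B *v x)"
          proof -
            have "A *v (B *v x) = (A ** B) *v x" by (simp add: matrix_vector_mul_assoc)
            also have "\<dots> = (B ** A) *v x" using comm A B by simp
            also have "\<dots> = B *v (z *s x)" using x by (simp add: K_def matrix_vector_mul_assoc[symmetric])
            finally show ?thesis by (simp add: mv_scale)
          qed
          ultimately show "B *v x \<in> K" by (simp add: K_def)
        qed
        have KW: "K \<subseteq> W" by (auto simp: K_def)
        have "K \<noteq> {0}" using False uW Au by (auto simp: K_def)
        then have "vec.dim W \<le> vec.dim K" using Wmin[OF Kinv KW] by simp
        then have "K = W" using vec.subspace_dim_equal[OF Ksub Wsub KW] by simp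
        then have "\<forall>x\<in>W. A *v x = z *s x" by (auto simp: K_def)
        then show ?thesis by blast
      qed
    qed
  qed
qed

lemma common_eig:
  assumes comm: "\<forall>A\<in>AA. \<forall>B\<in>AA. A ** B = B ** A"
    and V: "inv_sub AA V" and V0: "V \<noteq> {0}"
  shows "\<exists>v\<in>V. v \<noteq> 0 \<and> (\<forall>A\<in>AA. \<exists>c. A *v v = c *s v)"
proof -
  define P where "P d \<longleftrightarrow> (\<exists>W. inv_sub AA W \<and> W \<subseteq> V \<and> W \<noteq> {0} \<and> vec.dim W = d)" for d
  have "P (vec.dim V)" using V V0 by (auto simp: P_def)
  then have "P (LEAST d. P d)" by (rule LeastI)
  then obtain W where W: "inv_sub AA W" "W \<subseteq> V" "W \<noteq> {0}" "vec.dim W = (LEAST d. P d)"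
    by (auto simp: P_def)
  have Wmin: "vec.dim W \<le> vec.dim K" if "inv_sub AA K" "K \<subseteq> W" "K \<noteq> {0}" for K
  proof -
    have "P (vec.dim K)" using that W(2) unfolding P_def by blast
    then show ?thesis using W(4) by (simp add: Least_le)
  qed
  have "0 \<in> W" using W(1) by (auto simp: inv_sub_def vec.subspace_0)
  then obtain w where w: "w \<in> W" "w \<noteq> 0" using W(3) by blast
  have "\<exists>c. A *v w = c *s w" if A: "A \<in> AA" for A
  proof -
    obtain p where p: "p \<noteq> 0" "peval p A w = 0" using annihilator by blast
    have "w = 0 \<or> (\<exists>c. \<forall>u\<in>W. A *v u = c *s u)"
      using scalar_on_min[OF comm W(1) Wmin A, of "degree p"] p w(1) by blast
    then show ?thesis using w by blast
  qed
  then show ?thesis using w W(2) by blast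
qed

definition herm :: "complex^'n \<Rightarrow> complex^'n \<Rightarrow> complex" where
  "herm v e = (\<Sum>i\<in>UNIV. v$i * cnj (e$i))"

lemma Re_herm: "Re (herm x e) = x \<bullet> e"
  by (simp add: herm_def inner_vec_def inner_complex_def Re_sum)

lemma Im_herm: "Im (herm x e) = x \<bullet> (\<i> *s e)"
  by (simp add: herm_def inner_vec_def inner_complex_def Im_sum algebra_simps)

lemma herm_adj: "herm (A *v v) e = herm v (conj_transpose A *v e)"
proof -
  have "herm (A *v v) e = (\<Sum>i\<in>UNIV. \<Sum>j\<in>UNIV. A$i$j * v$j * cnj (e$i))"
    by (simp add: herm_def matrix_vector_mult_def sum_distrib_right)
  also have "\<dots> = (\<Sum>j\<in>UNIV. \<Sum>i\<in>UNIV. A$i$j * v$j * cnj (e$i))" by (rule sum.swap)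
  also have "\<dots> = herm v (conj_transpose A *v e)"
    by (simp add: herm_def matrix_vector_mult_def conj_transpose_def sum_distrib_left mult_ac)
  finally show ?thesis .
qed

lemma herm_add: "herm (u + v) e = herm u e + herm v e"
  by (simp add: herm_def distrib_right sum.distrib)
lemma herm_scale: "herm (c *s v) e = c * herm v e"
  by (simp add: herm_def sum_distrib_left mult.assoc)
lemma herm_zero: "herm 0 e = 0"
  by (simp add: herm_def)

lemma scaleR_vs: "r *\<^sub>R (x::complex^'n) = complex_of_real r *s x"
proof (unfold vec_eq_iff, rule allI)
  fix i
  have "(r *\<^sub>R x)$i = r *\<^sub>R (x$i)" by (rule vector_scaleR_component)
  also have "\<dots> = of_real r * x$i" by (rule scaleR_conv_of_real)
  also have "\<dots> = (of_real r *s x)$i" by (rule vector_smult_component[symmetric])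
  finally show "(r *\<^sub>R x)$i = (of_real r *s x)$i" .
qed

lemma span_eig:
  assumes comm: "\<forall>A\<in>AA. \<forall>B\<in>AA. A ** B = B ** A"
    and adj: "\<forall>A\<in>AA. conj_transpose A \<in> AA"
  shows "vec.span {v::complex^'n. v \<noteq> 0 \<and> (\<forall>A\<in>AA. \<exists>c. A *v v = c *s v)} = UNIV"
proof (rule ccontr)
  define S where "S = {v::complex^'n. v \<noteq> 0 \<and> (\<forall>A\<in>AA. \<exists>c. A *v v = c *s v)}"
  define E where "E = vec.span S"
  assume "vec.span {v::complex^'n. v \<noteq> 0 \<and> (\<forall>A\<in>AA. \<exists>c. A *v v = c *s v)} \<noteq> UNIV"
  then have EU: "E \<noteq> UNIV" by (simp add: E_def S_def)
  have Einv: "A *v e \<in> E" if A: "A \<in> AA" and e: "e \<in> E" for A e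
    using e unfolding E_def
  proof (induction rule: vec.span_induct_alt)
    case base show ?case by (simp add: vec.span_zero)
  next
    case (step c x y)
    have xS: "x \<in> S" and IH: "A *v y \<in> vec.span S" using step by auto
    obtain d where d: "A *v x = d *s x" using A xS by (auto simp: S_def)
    have eq: "A *v (c *s x + y) = (c*d) *s x + A *v y"
      by (simp add: matrix_vector_right_distrib mv_scale vector_smult_assoc d)
    have "(c*d) *s x \<in> vec.span S" using xS by (intro vec.span_scale vec.span_base)
    from vec.span_add[OF this IH] show ?case by (simp only: eq)
  qed
  have Esub: "subspace E"
    unfolding subspace_def E_def using vec.span_zero vec.span_add vec.span_scale by (auto simp: scaleR_vs)
  have dE: "dim E < DIM(complex^'n)"
  proof -
    have "dim E \<le> DIM(complex^'n)" by (rule dim_subset_UNIV)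
    moreover have "dim E \<noteq> DIM(complex^'n)"
    proof
      assume "dim E = DIM(complex^'n)"
      then have "span E = UNIV" using dim_eq_full by metis
      then show False using EU Esub by (metis span_eq_iff)
    qed
    ultimately show ?thesis by simp
  qed
  obtain x :: "complex^'n" where x: "x \<noteq> 0" "\<And>y. y \<in> span E \<Longrightarrow> orthogonal x y"
    using orthogonal_to_subspace_exists[OF dE] by blast
  have xE: "x \<bullet> e = 0" if "e \<in> E" for e using x(2)[of e] that span_superset[of E] by (auto simp: orthogonal_def)
  define V where "V = {v. \<forall>e\<in>E. herm v e = 0}"
  have xV: "x \<in> V"
  proof -
    have "herm x e = 0" if e: "e \<in> E" for e
    proof -
      have "\<i> *s e \<in> E" using e by (simp add: E_def vec.span_scale)
      then show ?thesis using xE[OF e] xE[of "\<i> *s e"] Re_herm[of x e] Im_herm[of x e] by (simp add: complex_eq_iff)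
    qed
    then show ?thesis by (simp add: V_def)
  qed
  have Vinv: "inv_sub AA V"
    unfolding inv_sub_def
  proof (intro conjI ballI)
    show "vec.subspace V"
      unfolding vec.subspace_def V_def by (simp add: herm_add herm_scale herm_zero)
    fix A v assume A: "A \<in> AA" and v: "v \<in> V"
    show "A *v v \<in> V"
      unfolding V_def using v adj A Einv by (simp add: herm_adj V_def)
  qed
  have "V \<noteq> {0}" using xV x(1) by auto
  from common_eig[OF comm Vinv this] obtain v where v: "v \<in> V" "v \<noteq> 0" "\<forall>A\<in>AA. \<exists>c. A *v v = c *s v"
    by blast
  then have "v \<in> E" by (auto simp: E_def S_def intro: vec.span_base)
  then have "herm v v = 0" using v(1) by (simp add: V_def)
  then have "v \<bullet> v = 0" using Re_herm[of v v] by simp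
  then show False using v(2) by simp
qed

lemma eig_basis:
  assumes comm: "\<forall>A\<in>AA. \<forall>B\<in>AA. A ** B = B ** A"
    and adj: "\<forall>A\<in>AA. conj_transpose A \<in> AA"
  shows "\<exists>\<beta>::'n \<Rightarrow> complex^'n. (\<forall>i. \<beta> i \<noteq> 0 \<and> (\<forall>A\<in>AA. \<exists>c. A *v \<beta> i = c *s \<beta> i)) \<and>
           surj (\<lambda>w. \<Sum>i\<in>UNIV. w$i *s \<beta> i)"
proof -
  define S where "S = {v::complex^'n. v \<noteq> 0 \<and> (\<forall>A\<in>AA. \<exists>c. A *v v = c *s v)}"
  obtain B where B: "B \<subseteq> S" "vec.independent B" "S \<subseteq> vec.span B"
    by (rule vec.maximal_independent_subset)
  have spanB: "vec.span B = UNIV"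
  proof -
    have "vec.span S \<subseteq> vec.span B" using vec.span_mono[OF B(3)] by (metis vec.span_span)
    then show ?thesis using span_eig[OF comm adj] by (auto simp: S_def)
  qed
  have fB: "finite B" using B(2) vec.finiteI_independent by blast
  have cB: "card B = CARD('n)"
    using vec.basis_card_eq_dim[of B UNIV] B(2) spanB by (simp add: card_cart_basis)
  obtain \<beta> where \<beta>: "bij_betw \<beta> (UNIV::'n set) B" using finite_same_card_bij[of "UNIV::'n set" B] fB cB by auto
  have eig: "\<beta> i \<noteq> 0 \<and> (\<forall>A\<in>AA. \<exists>c. A *v \<beta> i = c *s \<beta> i)" for i
    using \<beta> B(1) by (auto simp: bij_betw_def S_def)
  have ex: "\<exists>w. (\<Sum>i\<in>UNIV. w$i *s \<beta> i) = y" for y :: "complex^'n"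
  proof -
    have "y \<in> vec.span B" using spanB by simp
    then obtain u where u: "y = (\<Sum>v\<in>B. u v *s v)" using vec.span_finite[OF fB] by auto
    also have "\<dots> = (\<Sum>i\<in>UNIV. u (\<beta> i) *s \<beta> i)"
      using sum.reindex_bij_betw[OF \<beta>, of "\<lambda>v. u v *s v"] by simp
    finally have "(\<Sum>i\<in>UNIV. (\<chi> i. u (\<beta> i))$i *s \<beta> i) = y" by simp
    then show ?thesis by blast
  qed
  have "surj (\<lambda>w. \<Sum>i\<in>UNIV. w$i *s \<beta> i)" unfolding surj_def using ex by metis
  then show ?thesis using eig by blast
qed

lemma cont_nth:
  fixes f :: "'x::topological_space \<Rightarrow> 'b::real_normed_vector^'m"
  shows "continuous_on S f \<Longrightarrow> continuous_on S (\<lambda>x. f x $ i)"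
  using continuous_on_compose2[of UNIV "\<lambda>v. v $ i" S f, OF linear_continuous_on[OF bounded_linear_vec_nth]] by auto

lemma rep_diag:
  fixes \<rho> :: "complex \<Rightarrow> complex^'n^'n"
  assumes rep: "unitary_rep \<rho>"
  shows "\<exists>(Q::complex^'n \<Rightarrow> complex^'n) (k::'n \<Rightarrow> int). linear Q \<and> inj Q \<and> surj Q \<and>
            (\<forall>g\<in>circle_group. \<forall>u. Q (\<rho> g *v u) = (\<chi> i. chr (k i) g * Q u $ i))"
proof -
  have cont: "continuous_on circle_group \<rho>"
    and unit: "\<And>g. g \<in> circle_group \<Longrightarrow> unitary (\<rho> g)"
    and hom: "\<And>g h. g \<in> circle_group \<Longrightarrow> h \<in> circle_group \<Longrightarrow> \<rho> (g*h) = \<rho> g ** \<rho> h"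
    using rep by (auto simp: unitary_rep_def)
  have one: "1 \<in> circle_group" by (simp add: circle_group_def)
  have cnj_in: "cnj g \<in> circle_group" if "g \<in> circle_group" for g
    using that by (simp add: circle_group_def)
  have gcnj: "g * cnj g = 1" if "g \<in> circle_group" for g
    using that complex_norm_square[of g] by (simp add: circle_group_def)
  have uL: "conj_transpose (\<rho> g) ** \<rho> g = mat 1" if "g \<in> circle_group" for g
    using unit[OF that] by (simp add: unitary_def)
  have rho1: "\<rho> 1 = mat 1"
  proof -
    have e: "\<rho> 1 = \<rho> 1 ** \<rho> 1" using hom[OF one one] by simp
    have "\<rho> 1 = mat 1 ** \<rho> 1" by simp
    also have "\<dots> = (conj_transpose (\<rho> 1) ** \<rho> 1) ** \<rho> 1" using uL[OF one] by simp
    also have "\<dots> = conj_transpose (\<rho> 1) ** (\<rho> 1 ** \<rho> 1)" by (simp add: matrix_mul_assoc)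
    also have "\<dots> = conj_transpose (\<rho> 1) ** \<rho> 1" by (simp only: e[symmetric])
    also have "\<dots> = mat 1" by (rule uL[OF one])
    finally show ?thesis .
  qed
  have adjr: "conj_transpose (\<rho> g) = \<rho> (cnj g)" if g: "g \<in> circle_group" for g
  proof -
    have "conj_transpose (\<rho> g) = conj_transpose (\<rho> g) ** \<rho> (g * cnj g)" using gcnj[OF g] rho1 by simp
    also have "\<dots> = (conj_transpose (\<rho> g) ** \<rho> g) ** \<rho> (cnj g)"
      using hom[OF g cnj_in[OF g]] by (simp add: matrix_mul_assoc)
    also have "\<dots> = \<rho> (cnj g)" using uL[OF g] by simp
    finally show ?thesis .
  qed
  define AA where "AA = \<rho> ` circle_group"
  have comm: "\<forall>A\<in>AA. \<forall>B\<in>AA. A ** B = B ** A"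
  proof (intro ballI)
    fix A B assume "A \<in> AA" "B \<in> AA"
    then obtain g h where gh: "g \<in> circle_group" "h \<in> circle_group" "A = \<rho> g" "B = \<rho> h"
      by (auto simp: AA_def)
    then show "A ** B = B ** A" using hom[OF gh(1,2)] hom[OF gh(2,1)] by (simp add: mult.commute)
  qed
  have adj: "\<forall>A\<in>AA. conj_transpose A \<in> AA"
    using adjr cnj_in by (auto simp: AA_def)
  obtain \<beta> :: "'n \<Rightarrow> complex^'n" where \<beta>: "\<forall>i. \<beta> i \<noteq> 0 \<and> (\<forall>A\<in>AA. \<exists>c. A *v \<beta> i = c *s \<beta> i)"
    and s\<beta>: "surj (\<lambda>w. \<Sum>i\<in>UNIV. w$i *s \<beta> i)"
    using eig_basis[OF comm adj] by blast
  define lam where "lam i g = (SOME c. \<rho> g *v \<beta> i = c *s \<beta> i)" for i g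
  have lam: "\<rho> g *v \<beta> i = lam i g *s \<beta> i" if "g \<in> circle_group" for i g
    unfolding lam_def by (rule someI_ex) (use \<beta> that in \<open>auto simp: AA_def\<close>)
  have k_ex: "\<exists>k. \<forall>g\<in>circle_group. lam i g = chr k g" for i
  proof (rule character)
    obtain j where j: "\<beta> i $ j \<noteq> 0" using \<beta> by (metis vec_eq_iff zero_index)
    have lamj: "lam i g = (\<rho> g *v \<beta> i)$j / \<beta> i $ j" if "g \<in> circle_group" for g
      using lam[OF that, of i] j by simp
    have "continuous_on circle_group (\<lambda>g. (\<Sum>k\<in>UNIV. \<rho> g $ j $ k * \<beta> i $ k) / \<beta> i $ j)"
      by (intro continuous_intros cont_nth cont) (simp add: j)
    then show "continuous_on circle_group (lam i)"
      by (rule continuous_on_eq) (simp add: lamj matrix_vector_mult_def j)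
    show "lam i (g*h) = lam i g * lam i h" if g: "g \<in> circle_group" and h: "h \<in> circle_group" for g h
    proof -
      have gh: "g * h \<in> circle_group" using g h by (simp add: circle_group_def norm_mult)
      have "lam i (g*h) *s \<beta> i = \<rho> (g*h) *v \<beta> i" using lam[OF gh] by simp
      also have "\<dots> = \<rho> g *v (\<rho> h *v \<beta> i)" using hom[OF g h] by (simp add: matrix_vector_mul_assoc)
      also have "\<dots> = (lam i g * lam i h) *s \<beta> i"
        using lam[OF g] lam[OF h] by (simp add: mv_scale vector_smult_assoc mult.commute)
      finally have "lam i (g*h) *s \<beta> i = (lam i g * lam i h) *s \<beta> i" .
      then show ?thesis using \<beta> by auto
    qed
    show "lam i g \<noteq> 0" if g: "g \<in> circle_group" for g
    proof
      assume "lam i g = 0"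
      then have "\<rho> g *v \<beta> i = 0" using lam[OF g] by simp
      then have "conj_transpose (\<rho> g) *v (\<rho> g *v \<beta> i) = 0" by simp
      then have "\<beta> i = 0" using uL[OF g] by (simp add: matrix_vector_mul_assoc)
      then show False using \<beta> by blast
    qed
  qed
  obtain k where k: "\<And>i g. g \<in> circle_group \<Longrightarrow> lam i g = chr (k i) g"
    using k_ex by metis
  define M :: "complex^'n^'n" where "M = (\<chi> r c. \<beta> c $ r)"
  have Mw: "M *v w = (\<Sum>i\<in>UNIV. w$i *s \<beta> i)" for w
    by (simp add: vec_eq_iff M_def matrix_vector_mult_def sum_component mult.commute)
  have "(*v) M = (\<lambda>w. \<Sum>i\<in>UNIV. w$i *s \<beta> i)" by (rule ext) (simp add: Mw)
  then have Msurj: "surj ((*v) M)" using s\<beta> by simp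
  obtain Q where Q: "Vector_Spaces.linear (*s) (*s) Q" "\<forall>x. Q (M *v x) = x" "\<forall>x. M *v (Q x) = x"
    using vec.linear_surjective_isomorphism[OF matrix_vector_mul_linear_gen Msurj] by auto
  have "Q = (\<lambda>x. matrix Q *v x)" by (rule ext) (simp add: matrix_works[OF Q(1)])
  then have linQ: "linear Q" by (metis matrix_vector_mul_linear)
  have injQ: "inj Q" by (metis Q(3) injI)
  have surjQ: "surj Q" by (metis Q(2) surjI)
  have inter: "Q (\<rho> g *v u) = (\<chi> i. chr (k i) g * Q u $ i)" if g: "g \<in> circle_group" for g u
  proof -
    define w where "w = Q u"
    have "u = M *v w" using Q(3) by (simp add: w_def)
    then have "\<rho> g *v u = (\<Sum>i\<in>UNIV. w$i *s (\<rho> g *v \<beta> i))" by (simp add: Mw mv_sum mv_scale)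
    also have "\<dots> = (\<Sum>i\<in>UNIV. (chr (k i) g * w$i) *s \<beta> i)"
      using lam[OF g] k[OF g] by (simp add: vector_smult_assoc mult.commute)
    also have "\<dots> = M *v (\<chi> i. chr (k i) g * w$i)" by (simp add: Mw)
    finally show ?thesis using Q(2) by (simp add: w_def)
  qed
  show ?thesis by (rule exI[of _ Q], rule exI[of _ k]) (use linQ injQ surjQ inter in auto)
qed

inductive_set polyf :: "('a::real_normed_vector \<Rightarrow> real) set" where
  pconst: "(\<lambda>x. c) \<in> polyf"
| plin: "bounded_linear l \<Longrightarrow> l \<in> polyf"
| padd: "f \<in> polyf \<Longrightarrow> g \<in> polyf \<Longrightarrow> (\<lambda>x. f x + g x) \<in> polyf"
| pmul: "f \<in> polyf \<Longrightarrow> g \<in> polyf \<Longrightarrow> (\<lambda>x. f x * g x) \<in> polyf"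

lemma pdiff: "f \<in> polyf \<Longrightarrow> g \<in> polyf \<Longrightarrow> (\<lambda>x. f x - g x) \<in> polyf"
proof -
  assume f: "f \<in> polyf" and g: "g \<in> polyf"
  have "(\<lambda>x. f x + (\<lambda>x. -1) x * g x) \<in> polyf" by (intro padd pmul f g pconst)
  then show ?thesis by simp
qed

lemma pneg: "f \<in> polyf \<Longrightarrow> (\<lambda>x. - f x) \<in> polyf"
  using pdiff[OF pconst[of 0]] by simp

lemma polyf_deriv:
  assumes "f \<in> polyf"
  shows "(\<forall>x. (f has_derivative frechet_derivative f (at x)) (at x)) \<and>
         (\<forall>v. (\<lambda>x. frechet_derivative f (at x) v) \<in> polyf)"
  using assms
proof (induction rule: polyf.induct)
  case (pconst c)
  have d: "frechet_derivative (\<lambda>x. c) (at x) = (\<lambda>v. 0)" for x :: 'a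
    by (rule frechet_derivative_at[symmetric]) (rule has_derivative_const)
  show ?case using d has_derivative_const[of c] by (simp add: polyf.pconst)
next
  case (plin l)
  have d: "frechet_derivative l (at x) = l" for x
    by (rule frechet_derivative_at[symmetric]) (rule bounded_linear.has_derivative[OF plin], rule has_derivative_ident)
  have "(\<lambda>x::'a. l v) \<in> polyf" for v by (rule polyf.pconst)
  then show ?case using d bounded_linear.has_derivative[OF plin has_derivative_ident] by simp
next
  case (padd f g)
  have hd: "((\<lambda>x. f x + g x) has_derivative (\<lambda>v. frechet_derivative f (at x) v + frechet_derivative g (at x) v)) (at x)" for x
    using padd.IH by (intro has_derivative_add) auto
  have d: "frechet_derivative (\<lambda>x. f x + g x) (at x) = (\<lambda>v. frechet_derivative f (at x) v + frechet_derivative g (at x) v)" for x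
    by (rule frechet_derivative_at[symmetric, OF hd])
  show ?case using hd d padd.IH by (auto intro: polyf.padd)
next
  case (pmul f g)
  have hd: "((\<lambda>x. f x * g x) has_derivative (\<lambda>v. f x * frechet_derivative g (at x) v + frechet_derivative f (at x) v * g x)) (at x)" for x
    using pmul.IH by (intro has_derivative_mult) auto
  have d: "frechet_derivative (\<lambda>x. f x * g x) (at x) = (\<lambda>v. f x * frechet_derivative g (at x) v + frechet_derivative f (at x) v * g x)" for x
    by (rule frechet_derivative_at[symmetric, OF hd])
  show ?case using hd d pmul.IH pmul.hyps by (auto intro!: polyf.padd polyf.pmul)
qed

definition smoothF :: "('a::real_normed_vector \<Rightarrow> 'b::euclidean_space) set" where
  "smoothF = {h. \<forall>b\<in>Basis. (\<lambda>x. h x \<bullet> b) \<in> polyf}"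

lemma smoothF_deriv:
  assumes h: "h \<in> smoothF"
  shows "h differentiable (at x) \<and> (\<forall>v. (\<lambda>x. frechet_derivative h (at x) v) \<in> smoothF)"
proof -
  have hb: "(\<lambda>x. h x \<bullet> b) \<in> polyf" if "b \<in> Basis" for b using h that by (auto simp: smoothF_def)
  define D where "D x v = (\<Sum>b\<in>Basis. frechet_derivative (\<lambda>x. h x \<bullet> b) (at x) v *\<^sub>R b)" for x v
  have Db: "D x v \<bullet> b = frechet_derivative (\<lambda>x. h x \<bullet> b) (at x) v" if "b \<in> Basis" for x v b
    using that by (simp add: D_def inner_sum_left inner_Basis if_distrib cong: if_cong)
  have hd: "(h has_derivative D x) (at x)" for x
  proof (subst has_derivative_componentwise_within, intro ballI)
    fix b :: 'b assume b: "b \<in> Basis"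
    have "((\<lambda>x. h x \<bullet> b) has_derivative frechet_derivative (\<lambda>x. h x \<bullet> b) (at x)) (at x)"
      using polyf_deriv[OF hb[OF b]] by blast
    then show "((\<lambda>x. h x \<bullet> b) has_derivative (\<lambda>v. D x v \<bullet> b)) (at x)"
      using Db[OF b] by simp
  qed
  have d: "frechet_derivative h (at x) = D x" for x by (rule frechet_derivative_at[symmetric, OF hd])
  have "(\<lambda>x. frechet_derivative h (at x) v) \<in> smoothF" for v
    unfolding smoothF_def d using Db polyf_deriv[OF hb] by auto
  then show ?thesis using hd differentiable_def by blast
qed

lemma smooth_onI: "f \<in> smoothF \<Longrightarrow> smooth_on UNIV f"
  unfolding smooth_on_def using smoothF_deriv by blast

definition rotz :: "complex \<Rightarrow> real^3 \<Rightarrow> real^3" where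
  "rotz c v = vector [Re c * v$1 - Im c * v$2, Im c * v$1 + Re c * v$2, v$3]"

lemma rotz_comp [simp]:
  "rotz c v $ 1 = Re c * v$1 - Im c * v$2"
  "rotz c v $ 2 = Im c * v$1 + Re c * v$2"
  "rotz c v $ 3 = v$3"
  by (simp_all add: rotz_def)

lemma vec3_eq: "(u::real^3) = v \<longleftrightarrow> u$1 = v$1 \<and> u$2 = v$2 \<and> u$3 = v$3"
  by (simp add: vec_eq_iff forall_3)

lemma inner3: "(u::real^3) \<bullet> v = u$1 * v$1 + u$2 * v$2 + u$3 * v$3"
  by (simp add: inner_vec_def sum_3)

lemma rotz_one: "rotz 1 v = v" by (simp add: vec3_eq)

lemma rotz_mult: "rotz (c*d) v = rotz c (rotz d v)" by (simp add: vec3_eq algebra_simps)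

lemma rotz_norm:
  assumes "norm c = 1" shows "norm (rotz c v) = norm v"
proof -
  have c: "Re c ^ 2 + Im c ^ 2 = 1" using assms by (simp add: cmod_def)
  have "rotz c v \<bullet> rotz c v = (Re c ^ 2 + Im c ^ 2) * (v$1^2 + v$2^2) + v$3^2"
    by (simp add: inner3 power2_eq_square algebra_simps)
  also have "\<dots> = v \<bullet> v" using c by (simp add: inner3 power2_eq_square)
  finally show ?thesis by (simp add: norm_eq_sqrt_inner)
qed

lemma rotz_linear: "linear (rotz c)"
  by (rule linearI) (simp_all add: vec3_eq algebra_simps)

lemma rotz_fix:
  assumes "rotz c y = y" "\<not> (y$1 = 0 \<and> y$2 = 0)"
  shows "c = 1"
proof -
  define z where "z = Complex (y$1) (y$2)"
  have z0: "z \<noteq> 0" using assms(2) by (simp add: z_def complex_eq_iff)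
  have "c * z = z" using assms(1) by (simp add: z_def complex_eq_iff vec3_eq algebra_simps)
  then have "(c - 1) * z = 0" by (simp add: algebra_simps)
  then show ?thesis using z0 by simp
qed

lemma chr_one [simp]: "chr k 1 = 1" by (simp add: chr_def)

lemma chr_mult: "chr k (g*h) = chr k g * chr k h"
  by (simp add: chr_def power_mult_distrib)

lemma chr_norm: "norm g = 1 \<Longrightarrow> norm (chr k g) = 1"
  by (simp add: chr_def norm_power)

definition act :: "('n \<Rightarrow> int) \<Rightarrow> complex \<Rightarrow> real^3^'n \<Rightarrow> real^3^'n" where
  "act k g x = (\<chi> i. rotz (chr (k i) g) (x$i))"

lemma act_nth [simp]: "act k g x $ i = rotz (chr (k i) g) (x$i)"
  by (simp add: act_def)

lemma pow_poly:
  assumes "(\<lambda>p. Re (G p)) \<in> polyf" "(\<lambda>p. Im (G p)) \<in> polyf"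
  shows "(\<lambda>p. Re (G p ^ m)) \<in> polyf \<and> (\<lambda>p. Im (G p ^ m)) \<in> polyf"
proof (induction m)
  case 0
  show ?case using pconst[of 1] pconst[of 0] by simp
next
  case (Suc m)
  have e1: "(\<lambda>p. Re (G p ^ Suc m)) = (\<lambda>p. Re (G p) * Re (G p ^ m) - Im (G p) * Im (G p ^ m))"
    by (simp add: fun_eq_iff)
  have e2: "(\<lambda>p. Im (G p ^ Suc m)) = (\<lambda>p. Re (G p) * Im (G p ^ m) + Im (G p) * Re (G p ^ m))"
    by (simp add: fun_eq_iff)
  show ?case unfolding e1 e2 using Suc assms by (auto intro!: pdiff padd pmul)
qed

lemma chr_poly:
  fixes F :: "'a::real_normed_vector \<Rightarrow> complex"
  assumes "bounded_linear F"
  shows "(\<lambda>p. Re (chr k (F p))) \<in> polyf \<and> (\<lambda>p. Im (chr k (F p))) \<in> polyf"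
proof -
  have r: "(\<lambda>p. Re (F p)) \<in> polyf" by (rule plin, rule bounded_linear_compose[OF bounded_linear_Re assms])
  have i: "(\<lambda>p. Im (F p)) \<in> polyf" by (rule plin, rule bounded_linear_compose[OF bounded_linear_Im assms])
  show ?thesis
  proof (cases "0 \<le> k")
    case True
    then show ?thesis using pow_poly[OF r i, of "nat k"] by (simp add: chr_def)
  next
    case False
    have r': "(\<lambda>p. Re (cnj (F p))) \<in> polyf" using r by simp
    have i': "(\<lambda>p. Im (cnj (F p))) \<in> polyf" using pneg[OF i] by simp
    show ?thesis using False pow_poly[OF r' i', of "nat (-k)"] by (simp add: chr_def)
  qed
qed

lemma act_smoothF:
  fixes k :: "'n::finite \<Rightarrow> int"
  shows "(\<lambda>p. act k (fst p) (snd p)) \<in> smoothF"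
  unfolding smoothF_def
proof (intro CollectI ballI)
  fix b :: "real^3^'n" assume "b \<in> Basis"
  then obtain i u where b: "b = axis i u" and u: "u \<in> (Basis :: (real^3) set)"
    by (auto simp: Basis_vec_def)
  obtain j where uj: "u = axis j 1" using u by (auto simp: Basis_vec_def)
  have eq: "(\<lambda>p. act k (fst p) (snd p) \<bullet> b) = (\<lambda>p. rotz (chr (k i) (fst p)) (snd p $ i) $ j)"
    by (simp add: fun_eq_iff b uj inner_axis)
  have cr: "(\<lambda>p. Re (chr (k i) (fst p))) \<in> polyf" "(\<lambda>p. Im (chr (k i) (fst p))) \<in> polyf"
    using chr_poly[OF bounded_linear_fst, of "k i"] by auto
  have co: "(\<lambda>p. (snd p :: real^3^'n) $ i $ m) \<in> polyf" for m
    by (rule plin, intro bounded_linear_compose[OF bounded_linear_vec_nth] bounded_linear_snd)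
  show "(\<lambda>p. act k (fst p) (snd p) \<bullet> b) \<in> polyf"
    unfolding eq
    using exhaust_3[of j] cr co by (auto intro!: pdiff padd pmul)
qed

lemma act_smooth:
  fixes k :: "'n::finite \<Rightarrow> int"
  shows "smooth_circle_action (act k) sphere_product"
  unfolding smooth_circle_action_def
proof (intro conjI ballI)
  fix g and x :: "real^3^'n" assume g: "g \<in> circle_group" and x: "x \<in> sphere_product"
  show "act k g x \<in> sphere_product"
    using x g by (simp add: sphere_product_def circle_group_def rotz_norm chr_norm)
next
  fix x :: "real^3^'n" show "act k 1 x = x" by (simp add: vec_eq_iff rotz_one)
next
  fix g h and x :: "real^3^'n" show "act k (g * h) x = act k g (act k h x)" by (simp add: vec_eq_iff chr_mult rotz_mult)
next
  show "\<exists>U F. circle_group \<times> (sphere_product :: (real^3^'n) set) \<subseteq> U \<and> smooth_on U F \<and>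
          (\<forall>g\<in>circle_group. \<forall>x\<in>sphere_product. F (g, x) = act k g x)"
    by (intro exI[of _ UNIV] exI[of _ "\<lambda>p. act k (fst p) (snd p)"])
       (simp add: smooth_onI act_smoothF)
qed

lemma tangent_sub:
  assumes x: "x \<in> sphere_product" and c: "curve_through sphere_product x \<gamma> v"
  shows "v$i \<bullet> x$i = 0"
proof -
  obtain e where e: "e > 0" "\<And>t. \<bar>t\<bar> < e \<Longrightarrow> \<gamma> t \<in> sphere_product"
    and g0: "\<gamma> 0 = x" and gd: "(\<gamma> has_vector_derivative v) (at 0)"
    using c by (auto simp: curve_through_def)
  have gd': "(\<gamma> has_derivative (\<lambda>h. h *\<^sub>R v)) (at 0)" using gd by (simp add: has_vector_derivative_def)
  have g1: "((\<lambda>t. \<gamma> t $ i) has_derivative (\<lambda>h. h *\<^sub>R v$i)) (at 0)"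
    using bounded_linear.has_derivative[OF bounded_linear_vec_nth gd', of i] by simp
  have q1: "((\<lambda>t. \<gamma> t $ i \<bullet> \<gamma> t $ i) has_derivative
             (\<lambda>h. \<gamma> 0 $ i \<bullet> (h *\<^sub>R v$i) + (h *\<^sub>R v$i) \<bullet> \<gamma> 0 $ i)) (at 0)"
    by (rule has_derivative_inner[OF g1 g1])
  have q2: "((\<lambda>t. \<gamma> t $ i \<bullet> \<gamma> t $ i) has_derivative (\<lambda>h. 0)) (at 0)"
  proof (rule has_derivative_transform_within_open[OF has_derivative_const[of 1] open_ball])
    show "0 \<in> ball (0::real) e" using e by simp
    fix t :: real assume "t \<in> ball 0 e"
    then have "\<gamma> t \<in> sphere_product" using e by (auto simp: dist_norm)
    then have "norm (\<gamma> t $ i) = 1" by (simp add: sphere_product_def)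
    then show "1 = \<gamma> t $ i \<bullet> \<gamma> t $ i" by (simp add: norm_eq_1)
  qed
  have eqf: "(\<lambda>h. \<gamma> 0 $ i \<bullet> (h *\<^sub>R v$i) + (h *\<^sub>R v$i) \<bullet> \<gamma> 0 $ i) = (\<lambda>h::real. 0)"
    by (rule has_derivative_unique[OF q1 q2])
  have "\<gamma> 0 $ i \<bullet> v$i + v$i \<bullet> \<gamma> 0 $ i = 0" using fun_cong[OF eqf, of 1] by simp
  then show ?thesis using g0 by (simp add: inner_commute)
qed

lemma tangent_sup:
  assumes x: "x \<in> sphere_product" and v: "\<And>i. v$i \<bullet> x$i = 0"
  shows "\<exists>\<gamma>. curve_through sphere_product x \<gamma> v"
proof -
  define f where "f i t = inverse (sqrt (1 + t^2 * (v$i \<bullet> v$i)))" for i t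
  define \<gamma> where "\<gamma> t = (\<chi> i. f i t *\<^sub>R (x$i + t *\<^sub>R v$i))" for t
  have nx: "x$i \<bullet> x$i = 1" for i using x by (simp add: sphere_product_def norm_eq_1)
  have inX: "\<gamma> t \<in> sphere_product" for t
  proof -
    have "norm (\<gamma> t $ i) = 1" for i
    proof -
      have pos: "0 < 1 + t^2 * (v$i \<bullet> v$i)" by (simp add: add_pos_nonneg)
      have "(x$i + t *\<^sub>R v$i) \<bullet> (x$i + t *\<^sub>R v$i) = 1 + t^2 * (v$i \<bullet> v$i)"
        using v[of i] nx[of i] by (simp add: inner_add_left inner_add_right inner_commute power2_eq_square)
      then have "norm (x$i + t *\<^sub>R v$i) = sqrt (1 + t^2 * (v$i \<bullet> v$i))" by (simp add: norm_eq_sqrt_inner)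
      then show ?thesis using pos by (simp add: \<gamma>_def f_def)
    qed
    then show ?thesis by (simp add: sphere_product_def)
  qed
  have g0: "\<gamma> 0 = x" by (simp add: \<gamma>_def f_def vec_eq_iff)
  have fd: "(f i has_real_derivative 0) (at 0)" for i
  proof -
    define c where "c = v$i \<bullet> v$i"
    have d1: "((\<lambda>t. 1 + t^2 * c) has_real_derivative 0) (at 0)"
      using Deriv.field_differentiable_add[OF DERIV_const[of 1] DERIV_cmult_right[OF DERIV_pow[of 2 0 UNIV], of c]]
      by simp
    have d2: "((\<lambda>t. sqrt (1 + t^2 * c)) has_real_derivative 0) (at 0)"
      using DERIV_chain2[OF DERIV_real_sqrt d1] by simp
    have d3: "((\<lambda>t. inverse (sqrt (1 + t^2 * c))) has_real_derivative 0) (at 0)"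
      using DERIV_inverse'[OF d2] by simp
    show ?thesis using d3 by (simp add: f_def[abs_def] c_def)
  qed
  have ld: "((\<lambda>t. x$i + t *\<^sub>R v$i) has_vector_derivative v$i) (at 0)" for i
    unfolding has_vector_derivative_def by (auto intro!: derivative_eq_intros)
  have cd: "((\<lambda>t. f i t *\<^sub>R (x$i + t *\<^sub>R v$i)) has_vector_derivative v$i) (at 0)" for i
    using has_vector_derivative_scaleR[OF fd ld, of i] by (simp add: f_def)
  have "(\<gamma> has_derivative (\<lambda>h. h *\<^sub>R v)) (at 0)"
  proof (subst has_derivative_componentwise_within, intro ballI)
    fix b :: "real^3^'a" assume "b \<in> Basis"
    then obtain i u where b: "b = axis i u" by (auto simp: Basis_vec_def)
    have "((\<lambda>t. f i t *\<^sub>R (x$i + t *\<^sub>R v$i)) has_derivative (\<lambda>h. h *\<^sub>R v$i)) (at 0)"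
      using cd[of i] by (simp add: has_vector_derivative_def)
    then have "((\<lambda>t. (f i t *\<^sub>R (x$i + t *\<^sub>R v$i)) \<bullet> u) has_derivative (\<lambda>h. (h *\<^sub>R v$i) \<bullet> u)) (at 0)"
      by (rule has_derivative_inner_left)
    then show "((\<lambda>t. \<gamma> t \<bullet> b) has_derivative (\<lambda>h. (h *\<^sub>R v) \<bullet> b)) (at 0)"
      by (simp add: b inner_axis \<gamma>_def)
  qed
  then have "(\<gamma> has_vector_derivative v) (at 0)" by (simp add: has_vector_derivative_def)
  then have "curve_through sphere_product x \<gamma> v"
    unfolding curve_through_def using g0 inX by (auto intro: exI[of _ 1])
  then show ?thesis by blast
qed

lemma tangent_eq:
  assumes x: "x \<in> sphere_product"
  shows "tangent_space sphere_product x = {v. \<forall>i. v$i \<bullet> x$i = 0}"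
proof (intro set_eqI iffI)
  fix v assume "v \<in> tangent_space sphere_product x"
  then obtain \<gamma> where "curve_through sphere_product x \<gamma> v" by (auto simp: tangent_space_def)
  then show "v \<in> {v. \<forall>i. v$i \<bullet> x$i = 0}" using tangent_sub[OF x] by blast
next
  fix v :: "real^3^'a" assume "v \<in> {v. \<forall>i. v$i \<bullet> x$i = 0}"
  then have "\<And>i. v$i \<bullet> x$i = 0" by simp
  then obtain \<gamma> where "curve_through sphere_product x \<gamma> v" using tangent_sup[OF x] by blast
  then show "v \<in> tangent_space sphere_product x" by (auto simp: tangent_space_def)
qed

lemma local_iso:
  fixes y :: "real^3"
  assumes ny: "norm y = 1"
  shows "\<exists>f::complex \<Rightarrow> real^3. linear f \<and> inj f \<and> range f = {w. w \<bullet> y = 0} \<and>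
           (y$1 = 0 \<and> y$2 = 0 \<longrightarrow> (\<forall>c z. rotz c (f z) = f (c * z)))"
proof (cases "y$1 = 0 \<and> y$2 = 0")
  case True
  define f :: "complex \<Rightarrow> real^3" where "f z = vector [Re z, Im z, 0]" for z
  have fc [simp]: "f z $ 1 = Re z" "f z $ 2 = Im z" "f z $ 3 = 0" for z by (simp_all add: f_def)
  have "y \<bullet> y = 1" using ny by (simp add: norm_eq_1)
  then have y3: "y$3 \<noteq> 0" using True by (auto simp: inner3)
  have lin: "linear f" by (rule linearI) (simp_all add: vec3_eq)
  have inj: "inj f" by (rule injI) (simp add: vec3_eq complex_eq_iff)
  have rng: "range f = {w. w \<bullet> y = 0}"
  proof
    show "range f \<subseteq> {w. w \<bullet> y = 0}" using True by (auto simp: inner3)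
    show "{w. w \<bullet> y = 0} \<subseteq> range f"
    proof
      fix w assume "w \<in> {w. w \<bullet> y = 0}"
      then have "w$3 = 0" using True y3 by (simp add: inner3)
      then have "w = f (Complex (w$1) (w$2))" by (simp add: vec3_eq)
      then show "w \<in> range f" by blast
    qed
  qed
  have "rotz c (f z) = f (c * z)" for c z by (simp add: vec3_eq)
  then show ?thesis using lin inj rng by blast
next
  case False
  have y0: "y \<noteq> 0" using ny by auto
  have sT: "subspace {w. y \<bullet> w = 0}" by (rule subspace_hyperplane)
  have dT: "dim {w. y \<bullet> w = 0} = 2" using dim_hyperplane[OF y0] by simp
  have dS: "dim (UNIV :: complex set) = 2" by simp
  obtain f :: "complex \<Rightarrow> real^3" where f: "linear f" "f ` UNIV = {w. y \<bullet> w = 0}" "inj_on f UNIV"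
    using subspace_isomorphism[OF subspace_UNIV sT] dS dT by metis
  have r: "range f = {w. w \<bullet> y = 0}" using f(2) by (simp add: inner_commute)
  have inj: "inj f" using f(3) .
  show ?thesis
  proof (intro exI[of _ f] conjI)
    show "linear f" by (rule f(1))
    show "inj f" by (rule inj)
    show "range f = {w. w \<bullet> y = 0}" by (rule r)
    show "y$1 = 0 \<and> y$2 = 0 \<longrightarrow> (\<forall>c z. rotz c (f z) = f (c * z))" using False by blast
  qed
qed

theorem lemma4p4:
  fixes \<rho> :: "complex \<Rightarrow> complex^'n^'n"
  assumes "unitary_rep \<rho>"
  shows "\<exists>a :: complex \<Rightarrow> real^3^'n \<Rightarrow> real^3^'n.
           smooth_circle_action a sphere_product \<and>
           (\<forall>x\<in>sphere_product. isotropy_rep_iso a sphere_product \<rho> x)"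
proof -
  obtain Q :: "complex^'n \<Rightarrow> complex^'n" and k :: "'n \<Rightarrow> int" where
    Q: "linear Q" "inj Q" "surj Q"
    and inter: "\<And>g u. g \<in> circle_group \<Longrightarrow> Q (\<rho> g *v u) = (\<chi> i. chr (k i) g * Q u $ i)"
    using rep_diag[OF assms] by blast
  have iso: "isotropy_rep_iso (act k) sphere_product \<rho> x" if x: "x \<in> sphere_product" for x
  proof -
    have nx: "norm (x$i) = 1" for i using x by (simp add: sphere_product_def)
    have "\<forall>i. \<exists>f::complex \<Rightarrow> real^3. linear f \<and> inj f \<and> range f = {w. w \<bullet> x$i = 0} \<and>
            (x$i$1 = 0 \<and> x$i$2 = 0 \<longrightarrow> (\<forall>c z. rotz c (f z) = f (c * z)))"
      using local_iso[OF nx] by blast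
    from choice[OF this] obtain \<iota> where \<iota>0: "\<forall>i. linear (\<iota> i) \<and> inj (\<iota> i) \<and> range (\<iota> i) = {w. w \<bullet> x$i = 0} \<and>
            (x$i$1 = 0 \<and> x$i$2 = 0 \<longrightarrow> (\<forall>c z. rotz c (\<iota> i z) = \<iota> i (c * z)))"
      by blast
    have \<iota>: "\<And>i. linear (\<iota> i)" "\<And>i. inj (\<iota> i)" "\<And>i. range (\<iota> i) = {w. w \<bullet> x$i = 0}"
      "\<And>i c z. x$i$1 = 0 \<and> x$i$2 = 0 \<Longrightarrow> rotz c (\<iota> i z) = \<iota> i (c * z)"
      using \<iota>0 by blast+
    define \<phi> where "\<phi> u = (\<chi> i. \<iota> i (Q u $ i))" for u
    have lin\<phi>: "linear \<phi>"
    proof (rule linearI)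
      fix u v
      have "\<phi> (u + v) $ i = (\<phi> u + \<phi> v) $ i" for i
        by (simp add: \<phi>_def linear_add[OF Q(1)] linear_add[OF \<iota>(1)])
      then show "\<phi> (u + v) = \<phi> u + \<phi> v" using vec_eq_iff by blast
    next
      fix r :: real and u
      have "\<phi> (r *\<^sub>R u) $ i = (r *\<^sub>R \<phi> u) $ i" for i
        by (simp add: \<phi>_def linear_scale[OF Q(1)] linear_scale[OF \<iota>(1)])
      then show "\<phi> (r *\<^sub>R u) = r *\<^sub>R \<phi> u" using vec_eq_iff by blast
    qed
    have inj\<phi>: "inj \<phi>"
    proof (rule injI)
      fix u v assume "\<phi> u = \<phi> v"
      then have "\<iota> i (Q u $ i) = \<iota> i (Q v $ i)" for i by (simp add: \<phi>_def vec_eq_iff)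
      then have "Q u $ i = Q v $ i" for i using \<iota>(2) by (meson injD)
      then have "Q u = Q v" by (simp add: vec_eq_iff)
      then show "u = v" using Q(2) by (meson injD)
    qed
    have io: "\<iota> i z \<bullet> x$i = 0" for i z using \<iota>(3)[of i] by blast
    have rng\<phi>: "range \<phi> = tangent_space sphere_product x"
    proof -
      have "range \<phi> = {v. \<forall>i. v$i \<bullet> x$i = 0}"
      proof (intro set_eqI iffI)
        fix v assume "v \<in> range \<phi>"
        then obtain u where "v = \<phi> u" by blast
        then show "v \<in> {v. \<forall>i. v$i \<bullet> x$i = 0}" using io by (simp add: \<phi>_def)
      next
        fix v assume "v \<in> {v. \<forall>i. v$i \<bullet> x$i = 0}"
        then have vi: "v$i \<in> range (\<iota> i)" for i using \<iota>(3)[of i] by simp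
        have "\<forall>i. \<exists>z. \<iota> i z = v$i"
        proof
          fix i show "\<exists>z. \<iota> i z = v$i" using vi[of i] by (auto simp: image_iff)
        qed
        from choice[OF this] obtain z where z: "\<And>i. \<iota> i (z i) = v$i" by blast
        obtain u where u: "Q u = (\<chi> i. z i)" using Q(3) unfolding surj_def by metis
        have "\<phi> u = v" by (simp add: \<phi>_def u z vec_eq_iff)
        then show "v \<in> range \<phi>" by blast
      qed
      then show ?thesis using tangent_eq[OF x] by simp
    qed
    have inter\<phi>: "((\<lambda>t. act k g (\<gamma> t)) has_vector_derivative \<phi> (\<rho> g *v u)) (at 0)"
      if g: "g \<in> isotropy (act k) x" and c: "curve_through sphere_product x \<gamma> (\<phi> u)" for g u \<gamma>
    proof -
      have gC: "g \<in> circle_group" and gx: "act k g x = x" using g by (auto simp: isotropy_def)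
      have lin: "linear (act k g)"
      proof (rule linearI)
        fix y z :: "real^3^'n"
        have "act k g (y + z) $ i = (act k g y + act k g z) $ i" for i
          by (simp add: linear_add[OF rotz_linear])
        then show "act k g (y + z) = act k g y + act k g z" using vec_eq_iff by blast
      next
        fix r :: real and y :: "real^3^'n"
        have "act k g (r *\<^sub>R y) $ i = (r *\<^sub>R act k g y) $ i" for i
          by (simp add: linear_scale[OF rotz_linear])
        then show "act k g (r *\<^sub>R y) = r *\<^sub>R act k g y" using vec_eq_iff by blast
      qed
      then have bl: "bounded_linear (act k g)" by (simp add: linear_conv_bounded_linear)
      have gd: "(\<gamma> has_derivative (\<lambda>h. h *\<^sub>R \<phi> u)) (at 0)"
        using c by (simp add: curve_through_def has_vector_derivative_def)
      have d1: "((\<lambda>t. act k g (\<gamma> t)) has_derivative (\<lambda>h. act k g (h *\<^sub>R \<phi> u))) (at 0)"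
        by (rule bounded_linear.has_derivative[OF bl gd])
      have d2: "act k g (h *\<^sub>R \<phi> u) = h *\<^sub>R act k g (\<phi> u)" for h by (rule linear_scale[OF lin])
      have d3: "act k g (\<phi> u) = \<phi> (\<rho> g *v u)"
      proof -
        have "rotz (chr (k i) g) (\<iota> i (Q u $ i)) = \<iota> i (chr (k i) g * Q u $ i)" for i
        proof (cases "x$i$1 = 0 \<and> x$i$2 = 0")
          case True then show ?thesis using \<iota>(4) by blast
        next
          case False
          have "rotz (chr (k i) g) (x$i) = x$i" using arg_cong[where f="\<lambda>y. y $ i", OF gx] by simp
          then have "chr (k i) g = 1" using rotz_fix False by blast
          then show ?thesis by (simp add: rotz_one)
        qed
        then show ?thesis by (simp add: \<phi>_def inter[OF gC] vec_eq_iff)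
      qed
      show ?thesis using d1 unfolding has_vector_derivative_def d2 d3 .
    qed
    show ?thesis unfolding isotropy_rep_iso_def
    proof (intro exI[of _ \<phi>] conjI ballI allI impI)
      show "linear \<phi>" by (rule lin\<phi>)
      show "inj \<phi>" by (rule inj\<phi>)
      show "range \<phi> = tangent_space sphere_product x" by (rule rng\<phi>)
      fix g u \<gamma> assume "g \<in> isotropy (act k) x" "curve_through sphere_product x \<gamma> (\<phi> u)"
      then show "((\<lambda>t. act k g (\<gamma> t)) has_vector_derivative \<phi> (\<rho> g *v u)) (at 0)" by (rule inter\<phi>)
    qed
  qed
  show ?thesis
  proof (intro exI[of _ "act k"] conjI ballI)
    show "smooth_circle_action (act k) sphere_product" by (rule act_smooth)
    fix x :: "real^3^'n" assume "x \<in> sphere_product"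
    then show "isotropy_rep_iso (act k) sphere_product \<rho> x" by (rule iso)
  qed
qed

end
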